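(* Let $G=(V,E)$ be a rigid graph with $V=\{v_1,v_2,\ldots,v_n\}$ and $n\ge3$, let $(G,p)$ be a generic complex realisation of $G$, and let $S$ be the set of all complex realisations of $G$ equivalent to $(G,p)$. Then each congruence class in $S$ contains exactly four realisations $(G,q)$ with $q(v_1)=(0,0)$ and $q(v_2)=(0,z)$ for some $z\in\mathbb{C}$. Moreover, exactly two of these four realisations have $\operatorname{Arg}z\in(0,\pi]$.
   Context: A complex realisation of a finite graph $G=(V,E)$ is a map $p:V\to\mathbb{C}^2$. For $P=(x,y)\in\mathbb{C}^2$ put $d(P)=x^2+y^2$. Realisations $(G,p),(G,q)$ are equivalent if $d(p(u)-p(v))=d(q(u)-q(v))$ for all $uv\in E$, and congruent if this holds for all $u,v\in V$. A realisation is generic if the set of all coordinates of the points $p(v)$ is algebraically independent over $\mathbb{Q}$. The rigidity matrix $R(G,p)$ is the $|E|\times2|V|$ matrix whose row for edge $uv$ has $p(u)-p(v)$ in the columns of $u$, $p(v)-p(u)$ in the columns of $v$, zeros elsewhere; $G$ is rigid if $\operatorname{rank}R(G,p)=2|V|-3$ for a generic real realisation $p$. $\operatorname{Arg}$ denotes the principal argument, with values in $(-\pi,\pi]$. *)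

theory Defs
  imports "HOL-Analysis.Analysis"
begin

text \<open>A polynomial is given by its finitely supported coefficient function on exponent vectors.\<close>
definition alg_indep_Q :: "('i \<Rightarrow> 'a::field_char_0) \<Rightarrow> 'i set \<Rightarrow> bool" where
  "alg_indep_Q x I \<longleftrightarrow>
     (\<forall>c :: ('i \<Rightarrow> nat) \<Rightarrow> rat.
        finite {\<alpha>. c \<alpha> \<noteq> 0}
        \<and> (\<forall>\<alpha>. c \<alpha> \<noteq> 0 \<longrightarrow> (\<forall>i. i \<notin> I \<longrightarrow> \<alpha> i = 0))
        \<and> (\<Sum>\<alpha>\<in>{\<alpha>. c \<alpha> \<noteq> 0}. of_rat (c \<alpha>) * (\<Prod>i\<in>I. x i ^ \<alpha> i)) = 0
        \<longrightarrow> (\<forall>\<alpha>. c \<alpha> = 0))"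

definition coords :: "('v \<Rightarrow> 'a \<times> 'a) \<Rightarrow> 'v \<times> bool \<Rightarrow> 'a" where
  "coords p = (\<lambda>(v, b). if b then fst (p v) else snd (p v))"

definition generic :: "('v::finite \<Rightarrow> 'a::field_char_0 \<times> 'a) \<Rightarrow> bool" where
  "generic p \<longleftrightarrow> alg_indep_Q (coords p) UNIV"

definition dsq :: "'a::comm_ring_1 \<times> 'a \<Rightarrow> 'a \<times> 'a \<Rightarrow> 'a" where
  "dsq P Q = (fst P - fst Q)^2 + (snd P - snd Q)^2"

definition equivalent :: "('v \<times> 'v) set \<Rightarrow> ('v \<Rightarrow> complex \<times> complex) \<Rightarrow> ('v \<Rightarrow> complex \<times> complex) \<Rightarrow> bool" where
  "equivalent E p q \<longleftrightarrow> (\<forall>(u, v) \<in> E. dsq (p u) (p v) = dsq (q u) (q v))"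

definition congruent :: "('v \<Rightarrow> complex \<times> complex) \<Rightarrow> ('v \<Rightarrow> complex \<times> complex) \<Rightarrow> bool" where
  "congruent p q \<longleftrightarrow> (\<forall>u v. dsq (p u) (p v) = dsq (q u) (q v))"

text \<open>Columns are indexed by vertices,
  each vertex carrying a pair of columns (a vector in real x real).\<close>
definition rigidity_row :: "('v::finite \<Rightarrow> real \<times> real) \<Rightarrow> 'v \<Rightarrow> 'v \<Rightarrow> (real \<times> real) ^ 'v" where
  "rigidity_row p u v = (\<chi> w. if w = u then p u - p v else if w = v then p v - p u else 0)"

text \<open>rank R(G,p): the row rank, i.e. the dimension of the span of the rows
  (this is how the library defines the rank of a matrix, rank A = dim (rows A)).\<close>
definition rigidity_rank :: "('v::finite \<times> 'v) set \<Rightarrow> ('v \<Rightarrow> real \<times> real) \<Rightarrow> nat" where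
  "rigidity_rank E p = dim ((\<lambda>(u, v). rigidity_row p u v) ` E)"

definition rigid :: "('v::finite \<times> 'v) set \<Rightarrow> bool" where
  "rigid E \<longleftrightarrow> (\<exists>p :: 'v \<Rightarrow> real \<times> real. generic p \<and> rigidity_rank E p = 2 * CARD('v) - 3)"

end

theory Submission
  imports Defs "HOL-Library.Function_Algebras"
begin


definition qsc :: "rat \<Rightarrow> ('b \<Rightarrow> 'a::field_char_0) \<Rightarrow> 'b \<Rightarrow> 'a" where
  "qsc r f = (\<lambda>z. of_rat r * f z)"

interpretation qv: vector_space "qsc :: rat \<Rightarrow> ('b \<Rightarrow> 'a::field_char_0) \<Rightarrow> _"
  by unfold_locales (auto simp: qsc_def fun_eq_iff algebra_simps of_rat_add of_rat_mult)

lemma fsum_apply: "(\<Sum>x\<in>A. f x) z = (\<Sum>x\<in>A. f x z)"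
  by (induction A rule: infinite_finite_induct) auto

lemma fpow_apply: "((f::'b \<Rightarrow> 'a::comm_ring_1) ^ n) z = f z ^ n"
  by (induction n) auto

lemma qsc_apply[simp]: "qsc r f z = of_rat r * f z"
  by (simp add: qsc_def)

lemma qsc_mult_left: "qsc r f * g = qsc r (f * g)"
  by (simp add: fun_eq_iff mult.assoc)
lemma qsc_mult_right: "g * qsc r f = qsc r (g * f)"
  by (simp add: fun_eq_iff mult.left_commute)

lemma span_mult:
  fixes f g :: "'b \<Rightarrow> 'a::field_char_0"
  assumes "f \<in> qv.span A" "g \<in> qv.span B"
    and "\<And>a b. a \<in> A \<Longrightarrow> b \<in> B \<Longrightarrow> a * b \<in> qv.span C"
  shows "f * g \<in> qv.span C"
proof -
  have inner: "a * g \<in> qv.span C" if a: "a \<in> A" for a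
  proof -
    have "qv.subspace {x. a * x \<in> qv.span C}"
      unfolding qv.subspace_def
      by (auto simp: distrib_left qv.span_zero qv.span_add qsc_mult_right qv.span_scale)
    then show ?thesis using qv.span_induct[OF assms(2), of "\<lambda>x. a * x \<in> qv.span C"] assms(3)[OF a]
      by auto
  qed
  have "qv.subspace {x. x * g \<in> qv.span C}"
    unfolding qv.subspace_def
    by (auto simp: distrib_right qv.span_zero qv.span_add qsc_mult_left qv.span_scale)
  then show ?thesis using qv.span_induct[OF assms(1), of "\<lambda>x. x * g \<in> qv.span C"] inner
    by auto
qed

definition mon :: "'i set \<Rightarrow> ('i \<Rightarrow> nat) \<Rightarrow> ('i \<Rightarrow> 'a::field_char_0) \<Rightarrow> 'a" where
  "mon I \<beta> = (\<lambda>z. \<Prod>i\<in>I. z i ^ \<beta> i)"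

definition PD :: "'i set \<Rightarrow> nat \<Rightarrow> (('i \<Rightarrow> 'a::field_char_0) \<Rightarrow> 'a) set" where
  "PD I D = qv.span (mon I ` {\<beta>. \<forall>i\<in>I. \<beta> i \<le> D})"

lemma mon_mult: "mon I \<beta> * mon I \<gamma> = mon I (\<lambda>i. \<beta> i + \<gamma> i)"
  by (simp add: mon_def fun_eq_iff power_add prod.distrib)

lemma PD_mult: "f \<in> PD I D1 \<Longrightarrow> g \<in> PD I D2 \<Longrightarrow> f * g \<in> PD I (D1 + D2)"
  unfolding PD_def
  by (erule span_mult, assumption) (auto simp: mon_mult intro!: qv.span_base add_mono)

lemma PD_mono: "D1 \<le> D2 \<Longrightarrow> PD I D1 \<subseteq> PD I D2"
  unfolding PD_def by (intro qv.span_mono image_mono) (auto intro: order_trans)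

lemma PD_add: "f \<in> PD I D \<Longrightarrow> g \<in> PD I D \<Longrightarrow> f + g \<in> PD I D"
  unfolding PD_def by (rule qv.span_add)

lemma PD_diff: "f \<in> PD I D \<Longrightarrow> g \<in> PD I D \<Longrightarrow> f - g \<in> PD I D"
  unfolding PD_def by (rule qv.span_diff)

lemma PD_scale: "f \<in> PD I D \<Longrightarrow> qsc r f \<in> PD I D"
  unfolding PD_def by (rule qv.span_scale)

lemma PD_const: "(\<lambda>z. of_rat r) \<in> PD I D"
proof -
  have "mon I (\<lambda>_. 0) \<in> PD I D" unfolding PD_def by (rule qv.span_base) auto
  then have "qsc r (mon I (\<lambda>_. 0)) \<in> PD I D" by (rule PD_scale)
  then show ?thesis by (simp add: mon_def qsc_def)
qed

lemma PD_var: fixes I :: "'i set" assumes "finite I" "i \<in> I"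
  shows "(\<lambda>z::'i \<Rightarrow> 'a::field_char_0. z i) \<in> PD I 1"
proof -
  have "(mon I (\<lambda>j. if j = i then 1 else 0) :: ('i \<Rightarrow> 'a) \<Rightarrow> 'a) \<in> PD I 1" unfolding PD_def by (rule qv.span_base) auto
  moreover have "(mon I (\<lambda>j. if j = i then 1 else 0) :: ('i \<Rightarrow> 'a) \<Rightarrow> 'a) = (\<lambda>z. z i)"
    using assms by (simp add: mon_def fun_eq_iff power_0 prod.delta[of I i] if_distrib cong: if_cong)
  ultimately show ?thesis by simp
qed

lemma PD_prodpow:
  assumes "finite J" "\<And>j. j \<in> J \<Longrightarrow> g j \<in> PD I d"
  shows "(\<lambda>z. \<Prod>j\<in>J. g j z ^ \<alpha> j) \<in> PD I (d * (\<Sum>j\<in>J. \<alpha> j))"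
  using assms
proof (induction J rule: finite_induct)
  case empty
  then show ?case using PD_const[of 1] by simp
next
  case (insert x F)
  have pw: "g x ^ n \<in> PD I (d * n)" for n
  proof (induction n)
    case 0 then show ?case using PD_const[of 1, where I=I] by (simp add: one_fun_def)
  next
    case (Suc n)
    have "g x * g x ^ n \<in> PD I (d + d * n)" by (rule PD_mult) (use insert Suc in auto)
    then show ?case by (simp only: power_Suc mult_Suc_right)
  qed
  have "g x ^ \<alpha> x * (\<lambda>z. \<Prod>j\<in>F. g j z ^ \<alpha> j) \<in> PD I (d * \<alpha> x + d * (\<Sum>j\<in>F. \<alpha> j))"
    by (rule PD_mult[OF pw]) (use insert in auto)
  moreover have "g x ^ \<alpha> x * (\<lambda>z. \<Prod>j\<in>F. g j z ^ \<alpha> j) = (\<lambda>z. \<Prod>j\<in>insert x F. g j z ^ \<alpha> j)"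
    using insert by (simp add: fun_eq_iff fpow_apply)
  ultimately show ?case using insert by (simp add: distrib_left)
qed

lemma card_mon_le:
  assumes "finite I"
  shows "finite (mon I ` {\<beta>. \<forall>i\<in>I. \<beta> i \<le> D} :: (('i \<Rightarrow> 'a::field_char_0) \<Rightarrow> 'a) set) \<and> card (mon I ` {\<beta>. \<forall>i\<in>I. \<beta> i \<le> D} :: (('i \<Rightarrow> 'a::field_char_0) \<Rightarrow> 'a) set) \<le> (D+1) ^ card I"
proof -
  have "mon I ` {\<beta>. \<forall>i\<in>I. \<beta> i \<le> D} = (mon I ` (PiE I (\<lambda>_. {..D})) :: (('i \<Rightarrow> 'a) \<Rightarrow> 'a) set)"
  proof (intro equalityI subsetI)
    fix m :: "('i \<Rightarrow> 'a) \<Rightarrow> 'a" assume "m \<in> mon I ` {\<beta>. \<forall>i\<in>I. \<beta> i \<le> D}"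
    then obtain \<beta> where b: "\<forall>i\<in>I. \<beta> i \<le> D" "m = mon I \<beta>" by auto
    have "mon I \<beta> = (mon I (restrict \<beta> I) :: ('i \<Rightarrow> 'a) \<Rightarrow> 'a)" by (simp add: mon_def)
    moreover have "restrict \<beta> I \<in> PiE I (\<lambda>_. {..D})" using b by auto
    ultimately show "m \<in> mon I ` (PiE I (\<lambda>_. {..D}))" using b by (metis image_eqI)
  qed (auto simp: PiE_def Pi_def)
  moreover have "card (mon I ` (PiE I (\<lambda>_. {..D})) :: (('i \<Rightarrow> 'a) \<Rightarrow> 'a) set) \<le> card (PiE I (\<lambda>_. {..D}))" by (rule card_image_le) (use assms in \<open>simp add: finite_PiE\<close>)
  moreover have "card (PiE I (\<lambda>_. {..D})) = (D+1) ^ card I" using assms by (simp add: card_PiE)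
  moreover have "finite (mon I ` (PiE I (\<lambda>_. {..D})) :: (('i \<Rightarrow> 'a) \<Rightarrow> 'a) set)"
    using assms by (simp add: finite_PiE)
  ultimately show ?thesis by simp
qed

lemma count_ineq:
  fixes d k m :: nat
  assumes "m < k"
  shows "(d*k*((d*k+1)^m) + 1)^m < ((d*k+1)^m + 1)^k"
proof -
  define M where "M = (d*k+1)^m"
  have "d*k*M + 1 \<le> (d*k+1)*(M+1)" by (simp add: algebra_simps)
  then have "(d*k*M + 1)^m \<le> ((d*k+1)*(M+1))^m" by (rule power_mono) simp
  also have "\<dots> = (d*k+1)^m * (M+1)^m" by (rule power_mult_distrib)
  also have "\<dots> = M * (M+1)^m" by (simp only: M_def[symmetric])
  also have "\<dots> < (M+1)^(Suc m)" by simp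
  also have "\<dots> \<le> (M+1)^k" by (rule power_increasing) (use assms in auto)
  finally show ?thesis by (simp add: M_def)
qed

lemma counting:
  fixes g :: "'j \<Rightarrow> ('i \<Rightarrow> 'a::field_char_0) \<Rightarrow> 'a"
  assumes I: "finite I" and J: "finite J" and IJ: "card I < card J" and g: "\<forall>j\<in>J. g j \<in> PD I d"
  shows "\<exists>A c. finite A \<and> (\<forall>\<alpha>\<in>A. \<forall>j. j \<notin> J \<longrightarrow> \<alpha> j = 0) \<and> (\<exists>\<alpha>\<in>A. c \<alpha> \<noteq> 0)
     \<and> (\<forall>z. (\<Sum>\<alpha>\<in>A. of_rat (c \<alpha>) * (\<Prod>j\<in>J. g j z ^ \<alpha> j)) = 0)"
proof -
  define k where "k = card J"
  define m where "m = card I"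
  define M where "M = (d*k+1)^m"
  define ext where "ext = (\<lambda>(f::'j \<Rightarrow> nat) j. if j \<in> J then f j else 0)"
  define A0 where "A0 = ext ` PiE J (\<lambda>_. {..M})"
  have injext: "inj_on ext (PiE J (\<lambda>_. {..M}))"
  proof (rule inj_onI)
    fix f f' assume f: "f \<in> PiE J (\<lambda>_. {..M})" "f' \<in> PiE J (\<lambda>_. {..M})" "ext f = ext f'"
    show "f = f'"
    proof
      fix j
      have "ext f j = ext f' j" using f(3) by simp
      then show "f j = f' j"
        using f by (cases "j \<in> J") (auto simp: ext_def PiE_def extensional_def)
    qed
  qed
  have finA0: "finite A0" unfolding A0_def using J by (simp add: finite_PiE)
  have cardA0: "card A0 = (M+1)^k" unfolding A0_def k_def
    using card_image[OF injext] J by (simp add: card_PiE)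
  have A0prop: "\<forall>\<alpha>\<in>A0. (\<forall>j\<in>J. \<alpha> j \<le> M) \<and> (\<forall>j. j \<notin> J \<longrightarrow> \<alpha> j = 0)"
    unfolding A0_def ext_def by (auto simp: PiE_def Pi_def)
  define G where "G = (\<lambda>\<alpha> (z::'i \<Rightarrow> 'a). \<Prod>j\<in>J. g j z ^ \<alpha> j)"
  define T where "T = (mon I ` {\<beta>. \<forall>i\<in>I. \<beta> i \<le> d*(k*M)} :: (('i \<Rightarrow> 'a) \<Rightarrow> 'a) set)"
  have GT: "G ` A0 \<subseteq> qv.span T"
  proof
    fix x assume "x \<in> G ` A0"
    then obtain \<alpha> where a: "\<alpha> \<in> A0" "x = G \<alpha>" by auto
    have "G \<alpha> \<in> PD I (d * (\<Sum>j\<in>J. \<alpha> j))" unfolding G_def by (rule PD_prodpow) (use J g in auto)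
    moreover have "(\<Sum>j\<in>J. \<alpha> j) \<le> k * M"
      using sum_bounded_above[of J \<alpha> M] A0prop a(1) by (auto simp: k_def)
    ultimately have "G \<alpha> \<in> PD I (d*(k*M))" using PD_mono[of "d * (\<Sum>j\<in>J. \<alpha> j)" "d*(k*M)" I] by auto
    then show "x \<in> qv.span T" using a by (simp add: PD_def T_def)
  qed
  have Tfin: "finite T" and Tcard: "card T \<le> (d*(k*M)+1)^m"
    using card_mon_le[OF I, of "d*(k*M)"] by (auto simp: T_def m_def)
  show ?thesis
  proof (cases "inj_on G A0")
    case False
    then obtain \<alpha> \<alpha>' where aa: "\<alpha> \<in> A0" "\<alpha>' \<in> A0" "\<alpha> \<noteq> \<alpha>'" "G \<alpha> = G \<alpha>'"
      unfolding inj_on_def by blast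
    define c where "c = (\<lambda>\<beta>. if \<beta> = \<alpha> then (1::rat) else -1)"
    show ?thesis
    proof (intro exI conjI)
      show "finite {\<alpha>, \<alpha>'}" by simp
      show "\<forall>\<beta>\<in>{\<alpha>, \<alpha>'}. \<forall>j. j \<notin> J \<longrightarrow> \<beta> j = 0" using A0prop aa by auto
      show "\<exists>\<beta>\<in>{\<alpha>, \<alpha>'}. c \<beta> \<noteq> 0" by (auto simp: c_def)
      show "\<forall>z. (\<Sum>\<beta>\<in>{\<alpha>, \<alpha>'}. of_rat (c \<beta>) * (\<Prod>j\<in>J. g j z ^ \<beta> j)) = (0::'a)"
        using aa(3) fun_cong[OF aa(4)] by (simp add: c_def G_def)
    qed
  next
    case True
    have cardG: "card (G ` A0) = (M+1)^k" using card_image[OF True] cardA0 by simp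
    have "qv.dependent (G ` A0)"
    proof (rule ccontr)
      assume ind: "\<not> qv.dependent (G ` A0)"
      have "card (G ` A0) \<le> card T" using qv.independent_span_bound[OF Tfin ind GT] by simp
      then have "(M+1)^k \<le> (d*(k*M)+1)^m" using cardG Tcard by simp
      moreover have "(d*k*M+1)^m < (M+1)^k" using count_ineq[of m k d] IJ by (simp add: M_def m_def k_def)
      ultimately show False by (simp add: mult.assoc)
    qed
    then obtain t u v where tu: "finite t" "t \<subseteq> G ` A0" "(\<Sum>v\<in>t. qsc (u v) v) = 0" "v \<in> t" "u v \<noteq> 0"
      unfolding qv.dependent_explicit by blast
    define A where "A = {\<alpha>\<in>A0. G \<alpha> \<in> t}"
    have bij: "bij_betw G A t"
      unfolding bij_betw_def A_def using tu(2) inj_on_subset[OF True] by auto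
    have "(\<Sum>\<alpha>\<in>A. qsc (u (G \<alpha>)) (G \<alpha>)) = (\<Sum>v\<in>t. qsc (u v) v)"
      by (rule sum.reindex_bij_betw[OF bij, of "\<lambda>v. qsc (u v) v"])
    then have sum0: "(\<Sum>\<alpha>\<in>A. qsc (u (G \<alpha>)) (G \<alpha>)) = 0" using tu(3) by simp
    show ?thesis
    proof (intro exI conjI)
      show "finite A" using finA0 by (simp add: A_def)
      show "\<forall>\<alpha>\<in>A. \<forall>j. j \<notin> J \<longrightarrow> \<alpha> j = 0" using A0prop by (auto simp: A_def)
      obtain \<alpha> where "\<alpha> \<in> A0" "v = G \<alpha>" using tu by auto
      then show "\<exists>\<alpha>\<in>A. (u \<circ> G) \<alpha> \<noteq> 0" using tu by (auto simp: A_def)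
      show "\<forall>z. (\<Sum>\<alpha>\<in>A. of_rat ((u \<circ> G) \<alpha>) * (\<Prod>j\<in>J. g j z ^ \<alpha> j)) = (0::'a)"
      proof
        fix z show "(\<Sum>\<alpha>\<in>A. of_rat ((u \<circ> G) \<alpha>) * (\<Prod>j\<in>J. g j z ^ \<alpha> j)) = (0::'a)"
          using fun_cong[OF sum0, of z] by (simp add: fsum_apply G_def)
      qed
    qed
  qed
qed

lemma mon_inj:
  assumes "mon (UNIV::'i::finite set) \<beta> = (mon UNIV \<gamma> :: ('i \<Rightarrow> 'a::field_char_0) \<Rightarrow> 'a)"
  shows "\<beta> = \<gamma>"
proof
  fix j
  define z where "z = (\<lambda>i::'i. if i = j then (2::'a) else 1)"
  have e: "mon UNIV \<delta> z = 2 ^ \<delta> j" for \<delta> :: "'i \<Rightarrow> nat"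
  proof -
    have "mon UNIV \<delta> z = (\<Prod>i\<in>UNIV. if i = j then (2::'a) ^ \<delta> i else 1)"
      unfolding mon_def z_def by (intro prod.cong) auto
    also have "\<dots> = 2 ^ \<delta> j" by (subst prod.delta) auto
    finally show ?thesis .
  qed
  have "(2::'a) ^ \<beta> j = 2 ^ \<gamma> j" using e[of \<beta>] e[of \<gamma>] assms by metis
  then have "(of_nat (2 ^ \<beta> j) :: 'a) = of_nat (2 ^ \<gamma> j)" by simp
  then have "(2::nat) ^ \<beta> j = 2 ^ \<gamma> j" by (simp only: of_nat_eq_iff)
  then show "\<beta> j = \<gamma> j" by simp
qed

lemma generic_zero:
  fixes z0 :: "'i::finite \<Rightarrow> 'a::field_char_0"
  assumes gen: "alg_indep_Q z0 UNIV" and F: "F \<in> qv.span (range (mon UNIV))" and F0: "F z0 = 0"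
  shows "F z = 0"
proof -
  obtain t r where tr: "finite t" "t \<subseteq> range (mon UNIV)" "F = (\<Sum>a\<in>t. qsc (r a) a)"
    using F unfolding qv.span_explicit by blast
  define B where "B = {\<beta>. mon UNIV \<beta> \<in> t}"
  have injm: "inj (mon UNIV :: _ \<Rightarrow> ('i \<Rightarrow> 'a) \<Rightarrow> 'a)" by (auto intro: injI mon_inj)
  have bij: "bij_betw (mon UNIV) B t"
    unfolding bij_betw_def B_def using tr(2) inj_on_subset[OF injm] by auto
  have finB: "finite B" using bij tr(1) bij_betw_finite by blast
  define c where "c = (\<lambda>\<beta>. if \<beta> \<in> B then r (mon UNIV \<beta>) else 0)"
  have supp: "{\<beta>. c \<beta> \<noteq> 0} \<subseteq> B" by (auto simp: c_def split: if_splits)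
  have Fz: "F z = (\<Sum>\<beta>\<in>B. of_rat (c \<beta>) * (\<Prod>i\<in>UNIV. z i ^ \<beta> i))" for z
  proof -
    have "F z = (\<Sum>a\<in>t. of_rat (r a) * a z)" by (simp add: tr(3) fsum_apply)
    also have "\<dots> = (\<Sum>\<beta>\<in>B. of_rat (r (mon UNIV \<beta>)) * mon UNIV \<beta> z)"
      by (rule sum.reindex_bij_betw[OF bij, symmetric])
    also have "\<dots> = (\<Sum>\<beta>\<in>B. of_rat (c \<beta>) * (\<Prod>i\<in>UNIV. z i ^ \<beta> i))"
      by (intro sum.cong) (auto simp: c_def mon_def)
    finally show ?thesis .
  qed
  have "(\<Sum>\<beta>\<in>{\<beta>. c \<beta> \<noteq> 0}. of_rat (c \<beta>) * (\<Prod>i\<in>UNIV. z0 i ^ \<beta> i)) =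
        (\<Sum>\<beta>\<in>B. of_rat (c \<beta>) * (\<Prod>i\<in>UNIV. z0 i ^ \<beta> i))"
    by (rule sum.mono_neutral_left[OF finB supp]) auto
  also have "\<dots> = 0" using Fz[of z0] F0 by simp
  finally have "\<forall>\<alpha>. c \<alpha> = 0"
    using gen finite_subset[OF supp finB] unfolding alg_indep_Q_def by blast
  then show ?thesis using Fz[of z] by simp
qed



lemma of_real_of_rat: "of_real (of_rat r :: real) = (of_rat r :: 'a::{real_field,field_char_0})"
  by (cases r) (simp add: of_rat_rat of_real_divide)

definition Pv :: "'j set \<Rightarrow> ('j \<Rightarrow> nat) set \<Rightarrow> (('j \<Rightarrow> nat) \<Rightarrow> rat) \<Rightarrow> ('j \<Rightarrow> 'a::field_char_0) \<Rightarrow> 'a" where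
  "Pv J A c y = (\<Sum>\<alpha>\<in>A. of_rat (c \<alpha>) * (\<Prod>j\<in>J. y j ^ \<alpha> j))"

definition ell :: "'v \<times> 'v \<Rightarrow> ('v \<times> bool \<Rightarrow> 'a::comm_ring_1) \<Rightarrow> 'a" where
  "ell e z = (z (fst e, True) - z (snd e, True))^2 + (z (fst e, False) - z (snd e, False))^2"

lemma ell_coords: "ell e (coords p) = dsq (p (fst e)) (p (snd e))"
  by (simp add: ell_def coords_def dsq_def)

lemma PD_sq_diff:
  assumes "finite I" "a \<in> I" "b \<in> I"
  shows "(\<lambda>z::'i \<Rightarrow> 'a::field_char_0. (z a - z b)^2) \<in> PD I 2"
proof -
  have d: "(\<lambda>z::'i \<Rightarrow> 'a. z a) - (\<lambda>z. z b) \<in> PD I 1"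
    by (rule PD_diff) (use PD_var assms in auto)
  have "((\<lambda>z::'i \<Rightarrow> 'a. z a) - (\<lambda>z. z b)) * ((\<lambda>z. z a) - (\<lambda>z. z b)) \<in> PD I (1+1)"
    by (rule PD_mult[OF d d])
  moreover have "((\<lambda>z::'i \<Rightarrow> 'a. z a) - (\<lambda>z. z b)) * ((\<lambda>z. z a) - (\<lambda>z. z b)) = (\<lambda>z. (z a - z b)^2)"
    by (simp add: fun_eq_iff power2_eq_square)
  ultimately show ?thesis by (metis one_add_one)
qed

lemma ell_PD: "(ell e :: ('v::finite \<times> bool \<Rightarrow> 'a::field_char_0) \<Rightarrow> 'a) \<in> PD UNIV 2"
proof -
  have "(\<lambda>z::'v \<times> bool \<Rightarrow> 'a. (z (fst e, True) - z (snd e, True))^2) + (\<lambda>z. (z (fst e, False) - z (snd e, False))^2) \<in> PD UNIV 2"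
    by (rule PD_add) (rule PD_sq_diff; simp)+
  then show ?thesis by (simp add: ell_def[abs_def] plus_fun_def)
qed

lemma Pv_span:
  fixes A :: "('v::finite \<times> 'v \<Rightarrow> nat) set"
  assumes "finite J"
  shows "(\<lambda>z::'v \<times> bool \<Rightarrow> 'a::field_char_0. Pv J A c (\<lambda>e. ell e z)) \<in> qv.span (range (mon UNIV))"
proof -
  have G: "(\<lambda>z::'v \<times> bool \<Rightarrow> 'a. \<Prod>j\<in>J. ell j z ^ \<alpha> j) \<in> qv.span (range (mon UNIV))" for \<alpha>
  proof -
    have "(\<lambda>z::'v \<times> bool \<Rightarrow> 'a. \<Prod>j\<in>J. ell j z ^ \<alpha> j) \<in> PD UNIV (2 * (\<Sum>j\<in>J. \<alpha> j))"
      by (rule PD_prodpow) (use assms ell_PD in auto)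
    then show ?thesis unfolding PD_def by (rule set_mp[OF qv.span_mono, rotated]) auto
  qed
  have "(\<Sum>\<alpha>\<in>A. qsc (c \<alpha>) (\<lambda>z::'v \<times> bool \<Rightarrow> 'a. \<Prod>j\<in>J. ell j z ^ \<alpha> j)) \<in> qv.span (range (mon UNIV))"
    by (intro qv.span_sum qv.span_scale G)
  moreover have "(\<Sum>\<alpha>\<in>A. qsc (c \<alpha>) (\<lambda>z::'v \<times> bool \<Rightarrow> 'a. \<Prod>j\<in>J. ell j z ^ \<alpha> j)) = (\<lambda>z. Pv J A c (\<lambda>e. ell e z))"
    by (simp add: fun_eq_iff fsum_apply Pv_def)
  ultimately show ?thesis by simp
qed

lemma Pv_generic:
  fixes p :: "'v::finite \<Rightarrow> 'a::field_char_0 \<times> 'a" and z :: "'v \<times> bool \<Rightarrow> 'a"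
  assumes "generic p" "finite J" "Pv J A c (\<lambda>e. dsq (p (fst e)) (p (snd e))) = 0"
  shows "Pv J A c (\<lambda>e. ell e z) = 0"
  using generic_zero[OF assms(1)[unfolded generic_def] Pv_span[OF assms(2)], of A c]
    assms(3) by (simp add: ell_coords)

lemma transfer_real:
  fixes p :: "'v::finite \<Rightarrow> complex \<times> complex" and x :: "'v \<Rightarrow> real \<times> real"
  assumes "generic p" "finite J" "Pv J A c (\<lambda>e. dsq (p (fst e)) (p (snd e))) = 0"
  shows "Pv J A c (\<lambda>e. dsq (x (fst e)) (x (snd e))) = 0"
proof -
  have "Pv J A c (\<lambda>e. ell e (\<lambda>i. complex_of_real (coords x i))) = 0"
    by (rule Pv_generic[OF assms])
  moreover have "Pv J A c (\<lambda>e. ell e (\<lambda>i. complex_of_real (coords x i))) =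
      of_real (Pv J A c (\<lambda>e. ell e (coords x)))"
    by (simp add: Pv_def ell_def of_real_of_rat)
  ultimately show ?thesis by (simp add: ell_coords)
qed

lemma deriv_prodpow:
  fixes y :: "'j \<Rightarrow> real \<Rightarrow> real"
  assumes "\<And>j. j \<in> J \<Longrightarrow> (y j has_real_derivative y' j) (at t0)"
  shows "((\<lambda>t. \<Prod>j\<in>J. y j t ^ \<alpha> j) has_real_derivative
     (\<Sum>e\<in>J. y' e * (of_nat (\<alpha> e) * y e t0 ^ (\<alpha> e - Suc 0) * (\<Prod>j\<in>J-{e}. y j t0 ^ \<alpha> j)))) (at t0)"
proof -
  have d: "((\<lambda>t. y j t ^ \<alpha> j) has_derivative (\<lambda>h. h * (of_nat (\<alpha> j) * (y' j * y j t0 ^ (\<alpha> j - Suc 0))))) (at t0)"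
    if "j \<in> J" for j
    using DERIV_power[OF assms[OF that], of "\<alpha> j"] unfolding has_field_derivative_def
    by (rule has_derivative_eq_rhs) (auto simp: fun_eq_iff mult.commute)
  have "((\<lambda>t. \<Prod>j\<in>J. y j t ^ \<alpha> j) has_derivative
     (\<lambda>h. \<Sum>i\<in>J. h * (of_nat (\<alpha> i) * (y' i * y i t0 ^ (\<alpha> i - Suc 0))) * (\<Prod>j\<in>J - {i}. y j t0 ^ \<alpha> j))) (at t0)"
    by (rule has_derivative_prod) (rule d)
  then show ?thesis unfolding has_field_derivative_def
    by (rule has_derivative_eq_rhs) (simp add: fun_eq_iff sum_distrib_left algebra_simps)
qed

lemma deriv_Pv:
  fixes y :: "'j \<Rightarrow> real \<Rightarrow> real"
  assumes "\<And>j. j \<in> J \<Longrightarrow> (y j has_real_derivative y' j) (at t0)"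
  shows "((\<lambda>t. Pv J A c (\<lambda>j. y j t)) has_real_derivative
     (\<Sum>\<alpha>\<in>A. of_rat (c \<alpha>) * (\<Sum>e\<in>J. y' e * (of_nat (\<alpha> e) * y e t0 ^ (\<alpha> e - Suc 0) * (\<Prod>j\<in>J-{e}. y j t0 ^ \<alpha> j))))) (at t0)"
  unfolding Pv_def
  by (intro DERIV_sum DERIV_cmult deriv_prodpow assms)

definition dA :: "'j \<Rightarrow> ('j \<Rightarrow> nat) set \<Rightarrow> ('j \<Rightarrow> nat) set" where
  "dA e A = (\<lambda>\<alpha>. \<alpha>(e := \<alpha> e - 1)) ` {\<alpha>\<in>A. \<alpha> e \<noteq> 0}"

definition dc :: "'j \<Rightarrow> (('j \<Rightarrow> nat) \<Rightarrow> rat) \<Rightarrow> ('j \<Rightarrow> nat) \<Rightarrow> rat" where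
  "dc e c = (\<lambda>\<beta>. of_nat (\<beta> e + 1) * c (\<beta>(e := \<beta> e + 1)))"

lemma regroup:
  fixes y :: "'j \<Rightarrow> 'a::field_char_0"
  assumes "finite J" "e \<in> J" "finite A"
  shows "(\<Sum>\<alpha>\<in>A. of_rat (c \<alpha>) * (of_nat (\<alpha> e) * y e ^ (\<alpha> e - Suc 0) * (\<Prod>j\<in>J-{e}. y j ^ \<alpha> j)))
       = Pv J (dA e A) (dc e c) y"
proof -
  define f where "f = (\<lambda>\<alpha>::'j \<Rightarrow> nat. \<alpha>(e := \<alpha> e - 1))"
  define B where "B = {\<alpha>\<in>A. \<alpha> e \<noteq> 0}"
  have inj: "inj_on f B"
  proof (rule inj_onI)
    fix a b assume ab: "a \<in> B" "b \<in> B" "f a = f b"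
    show "a = b"
    proof
      fix j
      have "f a j = f b j" using ab(3) by simp
      then show "a j = b j"
        using ab by (cases "j = e") (auto simp: f_def B_def)
    qed
  qed
  have "(\<Sum>\<alpha>\<in>A. of_rat (c \<alpha>) * (of_nat (\<alpha> e) * y e ^ (\<alpha> e - Suc 0) * (\<Prod>j\<in>J-{e}. y j ^ \<alpha> j)))
      = (\<Sum>\<alpha>\<in>B. of_rat (c \<alpha>) * (of_nat (\<alpha> e) * y e ^ (\<alpha> e - Suc 0) * (\<Prod>j\<in>J-{e}. y j ^ \<alpha> j)))"
    by (rule sum.mono_neutral_right) (use assms in \<open>auto simp: B_def\<close>)
  also have "\<dots> = (\<Sum>\<alpha>\<in>B. of_rat (dc e c (f \<alpha>)) * (\<Prod>j\<in>J. y j ^ f \<alpha> j))"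
  proof (rule sum.cong[OF refl])
    fix \<alpha> assume a: "\<alpha> \<in> B"
    then have ae: "\<alpha> e \<noteq> 0" by (simp add: B_def)
    have upd: "\<alpha>(e := \<alpha> e - 1 + 1) = \<alpha>" using ae by (simp add: fun_eq_iff)
    have "dc e c (f \<alpha>) = of_nat (\<alpha> e) * c \<alpha>"
      using ae by (simp add: dc_def f_def upd)
    moreover have "(\<Prod>j\<in>J. y j ^ f \<alpha> j) = y e ^ (\<alpha> e - Suc 0) * (\<Prod>j\<in>J-{e}. y j ^ \<alpha> j)"
      using assms by (simp add: prod.remove[of J e] f_def)
    ultimately show "of_rat (c \<alpha>) * (of_nat (\<alpha> e) * y e ^ (\<alpha> e - Suc 0) * (\<Prod>j\<in>J-{e}. y j ^ \<alpha> j))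
        = of_rat (dc e c (f \<alpha>)) * (\<Prod>j\<in>J. y j ^ f \<alpha> j)"
      by (simp add: of_rat_mult)
  qed
  also have "\<dots> = Pv J (dA e A) (dc e c) y"
    unfolding Pv_def dA_def f_def[symmetric] B_def[symmetric]
    by (rule sum.reindex[OF inj, symmetric, unfolded comp_def])
  finally show ?thesis .
qed

lemma row_inner:
  fixes x :: "'v::finite \<Rightarrow> real \<times> real"
  assumes "u \<noteq> v"
  shows "rigidity_row x u v \<bullet> r = (x u - x v) \<bullet> (r$u - r$v)"
proof -
  have "rigidity_row x u v \<bullet> r = (\<Sum>w\<in>UNIV. (if w = u then (x u - x v) \<bullet> r$u else 0) + (if w = v then (x v - x u) \<bullet> r$v else 0))"
    unfolding inner_vec_def rigidity_row_def using assms by (intro sum.cong) auto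
  also have "\<dots> = (x u - x v) \<bullet> r$u + (x v - x u) \<bullet> r$v"
    by (simp add: sum.distrib)
  also have "\<dots> = (x u - x v) \<bullet> (r$u - r$v)"
    by (simp add: inner_diff_left inner_diff_right)
  finally show ?thesis .
qed

lemma line_deriv:
  fixes x h :: "'v \<Rightarrow> real \<times> real"
  shows "((\<lambda>t. dsq (x u + t *\<^sub>R h u) (x v + t *\<^sub>R h v)) has_real_derivative
           2 * ((x u - x v) \<bullet> (h u - h v))) (at 0)"
  unfolding dsq_def
  by (auto intro!: derivative_eq_intros simp: inner_prod_def algebra_simps)

lemma jacobian_N:
  fixes x0 :: "'v::finite \<Rightarrow> real \<times> real"
  assumes gen: "generic x0"
    and loop: "\<forall>e\<in>J. fst e \<noteq> snd e"
    and ind: "independent ((\<lambda>e. rigidity_row x0 (fst e) (snd e)) ` J)"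
    and inj: "inj_on (\<lambda>e. rigidity_row x0 (fst e) (snd e)) J"
  shows "\<forall>A c. finite A \<and> (\<forall>\<alpha>\<in>A. (\<forall>j. j \<notin> J \<longrightarrow> \<alpha> j = 0) \<and> sum \<alpha> J \<le> N)
      \<and> Pv J A c (\<lambda>e. dsq (x0 (fst e)) (x0 (snd e))) = 0 \<longrightarrow> (\<forall>\<alpha>\<in>A. c \<alpha> = 0)"
proof (induction N rule: less_induct)
  case (less N)
  have finJ: "finite J" by simp
  define row where "row = (\<lambda>e. rigidity_row x0 (fst e) (snd e))"
  define L where "L = (\<lambda>(x::'v \<Rightarrow> real \<times> real) e. dsq (x (fst e)) (x (snd e)))"
  show ?case
  proof (intro allI impI)
    fix A c
    assume H: "finite A \<and> (\<forall>\<alpha>\<in>A. (\<forall>j. j \<notin> J \<longrightarrow> \<alpha> j = 0) \<and> sum \<alpha> J \<le> N)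
      \<and> Pv J A c (\<lambda>e. dsq (x0 (fst e)) (x0 (snd e))) = 0"
    have finA: "finite A" using H by simp
    have allx: "Pv J A c (L x) = 0" for x
    proof -
      have "Pv J A c (\<lambda>e. ell e (coords x)) = 0"
        by (rule Pv_generic[OF gen finJ]) (use H in simp)
      then show ?thesis by (simp add: ell_coords L_def)
    qed
    define a where "a = (\<lambda>e. Pv J (dA e A) (dc e c) (L x0))"
    have key: "(\<Sum>e\<in>J. 2 * ((x0 (fst e) - x0 (snd e)) \<bullet> (h (fst e) - h (snd e))) * a e) = 0" for h
    proof -
      define y where "y = (\<lambda>e t. L (\<lambda>w. x0 w + t *\<^sub>R h w) e)"
      define y' where "y' = (\<lambda>e. 2 * ((x0 (fst e) - x0 (snd e)) \<bullet> (h (fst e) - h (snd e))))"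
      have dy: "(y e has_real_derivative y' e) (at 0)" for e
        unfolding y_def y'_def L_def by (rule line_deriv)
      have y0: "y e 0 = L x0 e" for e by (simp add: y_def)
      have D: "((\<lambda>t. Pv J A c (\<lambda>j. y j t)) has_real_derivative
        (\<Sum>\<alpha>\<in>A. of_rat (c \<alpha>) * (\<Sum>e\<in>J. y' e * (of_nat (\<alpha> e) * y e 0 ^ (\<alpha> e - Suc 0) * (\<Prod>j\<in>J-{e}. y j 0 ^ \<alpha> j))))) (at 0)"
        by (rule deriv_Pv) (rule dy)
      have "(\<lambda>t. Pv J A c (\<lambda>j. y j t)) = (\<lambda>t. 0)"
        using allx by (simp add: y_def fun_eq_iff)
      then have "((\<lambda>t. Pv J A c (\<lambda>j. y j t)) has_real_derivative 0) (at 0)" by simp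
      with D have "(\<Sum>\<alpha>\<in>A. of_rat (c \<alpha>) * (\<Sum>e\<in>J. y' e * (of_nat (\<alpha> e) * y e 0 ^ (\<alpha> e - Suc 0) * (\<Prod>j\<in>J-{e}. y j 0 ^ \<alpha> j)))) = 0"
        by (rule DERIV_unique)
      also have "(\<Sum>\<alpha>\<in>A. of_rat (c \<alpha>) * (\<Sum>e\<in>J. y' e * (of_nat (\<alpha> e) * y e 0 ^ (\<alpha> e - Suc 0) * (\<Prod>j\<in>J-{e}. y j 0 ^ \<alpha> j))))
         = (\<Sum>e\<in>J. y' e * (\<Sum>\<alpha>\<in>A. of_rat (c \<alpha>) * (of_nat (\<alpha> e) * y e 0 ^ (\<alpha> e - Suc 0) * (\<Prod>j\<in>J-{e}. y j 0 ^ \<alpha> j))))"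
        by (simp add: sum_distrib_left sum.swap[of _ A] algebra_simps)
      also have "\<dots> = (\<Sum>e\<in>J. y' e * a e)"
        by (intro sum.cong refl) (simp add: a_def y0 regroup[OF finJ _ finA])
      finally show ?thesis by (simp add: y'_def)
    qed
    define r where "r = (\<Sum>e\<in>J. a e *\<^sub>R row e)"
    have "(\<Sum>e\<in>J. 2 * (row e \<bullet> r) * a e) = 0"
      using key[of "\<lambda>w. r $ w"] loop by (simp add: row_def row_inner)
    then have "2 * (r \<bullet> r) = 0"
      by (simp add: r_def inner_sum_left sum_distrib_left algebra_simps)
    then have r0: "r = 0" by simp
    have a0: "\<forall>e\<in>J. a e = 0"
    proof -
      have "(\<Sum>v\<in>row ` J. a (inv_into J row v) *\<^sub>R v) = r"
        unfolding r_def using inj[folded row_def]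
        by (subst sum.reindex) (auto intro!: sum.cong)
      then have s0: "(\<Sum>v\<in>row ` J. a (inv_into J row v) *\<^sub>R v) = 0" using r0 by simp
      have "a (inv_into J row v) = 0" if "v \<in> row ` J" for v
        using ind[folded row_def, unfolded real_vector.independent_explicit_module, rule_format,
            of "row ` J" "\<lambda>v. a (inv_into J row v)" v] s0 that by simp
      then have "\<forall>v\<in>row ` J. a (inv_into J row v) = 0" by blast
      then show ?thesis using inj[folded row_def] by auto
    qed
    have dz: "\<forall>\<beta>\<in>dA e A. dc e c \<beta> = 0" if eJ: "e \<in> J" for e
    proof (cases "dA e A = {}")
      case True then show ?thesis by simp
    next
      case False
      then obtain \<alpha>0 where a0A: "\<alpha>0 \<in> A" "\<alpha>0 e \<noteq> 0" by (auto simp: dA_def)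
      have "\<alpha>0 e \<le> sum \<alpha>0 J" by (rule member_le_sum) (use eJ in auto)
      then have N1: "1 \<le> N" using H a0A by fastforce
      have sub: "finite (dA e A) \<and> (\<forall>\<beta>\<in>dA e A. (\<forall>j. j \<notin> J \<longrightarrow> \<beta> j = 0) \<and> sum \<beta> J \<le> N - 1)
          \<and> Pv J (dA e A) (dc e c) (\<lambda>e. dsq (x0 (fst e)) (x0 (snd e))) = 0"
      proof (intro conjI ballI)
        show "finite (dA e A)" using finA by (simp add: dA_def)
        show "Pv J (dA e A) (dc e c) (\<lambda>e. dsq (x0 (fst e)) (x0 (snd e))) = 0"
          using a0 eJ by (simp add: a_def L_def)
      next
        fix \<beta> assume "\<beta> \<in> dA e A"
        then obtain \<alpha> where al: "\<alpha> \<in> A" "\<alpha> e \<noteq> 0" "\<beta> = \<alpha>(e := \<alpha> e - 1)" by (auto simp: dA_def)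
        show "\<forall>j. j \<notin> J \<longrightarrow> \<beta> j = 0" using H al eJ by auto
        have "sum \<alpha> J = \<alpha> e + sum \<alpha> (J - {e})" using eJ by (simp add: sum.remove)
        moreover have "sum \<beta> J = \<beta> e + sum \<beta> (J - {e})" using eJ by (simp add: sum.remove)
        moreover have "sum \<beta> (J - {e}) = sum \<alpha> (J - {e})" using al by (intro sum.cong) auto
        moreover have "sum \<alpha> J \<le> N" using H al by auto
        ultimately show "sum \<beta> J \<le> N - 1" using al by simp
      qed
      have "N - 1 < N" using N1 by simp
      from less[OF this] sub show ?thesis by blast
    qed
    have cz: "c \<alpha> = 0" if "\<alpha> \<in> A" "e \<in> J" "\<alpha> e \<noteq> 0" for \<alpha> e
    proof -
      have "\<alpha>(e := \<alpha> e - 1) \<in> dA e A" using that by (auto simp: dA_def)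
      then have "dc e c (\<alpha>(e := \<alpha> e - 1)) = 0" using dz that by blast
      moreover have "\<alpha>(e := \<alpha> e - 1 + 1) = \<alpha>" using that by (simp add: fun_eq_iff)
      ultimately show ?thesis using that by (simp add: dc_def)
    qed
    show "\<forall>\<alpha>\<in>A. c \<alpha> = 0"
    proof (rule ccontr)
      assume "\<not> (\<forall>\<alpha>\<in>A. c \<alpha> = 0)"
      then obtain \<alpha> where al: "\<alpha> \<in> A" "c \<alpha> \<noteq> 0" by blast
      have zero: "\<beta> = (\<lambda>_. 0)" if "\<beta> \<in> A" "c \<beta> \<noteq> 0" for \<beta>
      proof
        fix j
        have "\<forall>j. j \<notin> J \<longrightarrow> \<beta> j = 0" using H that(1) by blast
        then show "\<beta> j = 0" using that cz[of \<beta> j] by (cases "j \<in> J") (auto simp del: split_paired_All)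
      qed
      have z0: "(\<lambda>_. 0) \<in> A" "c (\<lambda>_. 0) \<noteq> 0" using zero[OF al] al by auto
      let ?t = "\<lambda>\<beta>. of_rat (c \<beta>) * (\<Prod>j\<in>J. dsq (x0 (fst j)) (x0 (snd j)) ^ \<beta> j)"
      have "Pv J A c (\<lambda>e. dsq (x0 (fst e)) (x0 (snd e))) = ?t (\<lambda>_. 0) + sum ?t (A - {\<lambda>_. 0})"
        unfolding Pv_def by (rule sum.remove[OF finA z0(1)])
      moreover have "sum ?t (A - {\<lambda>_. 0}) = 0" by (rule sum.neutral) (use zero in fastforce)
      ultimately have "Pv J A c (\<lambda>e. dsq (x0 (fst e)) (x0 (snd e))) = of_rat (c (\<lambda>_. 0))" by simp
      then show False using H z0 by simp
    qed
  qed
qed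

lemma jacobian:
  fixes x0 :: "'v::finite \<Rightarrow> real \<times> real" and p :: "'v \<Rightarrow> complex \<times> complex"
  assumes genp: "generic p" and gen: "generic x0"
    and loop: "\<forall>e\<in>J. fst e \<noteq> snd e"
    and ind: "independent ((\<lambda>e. rigidity_row x0 (fst e) (snd e)) ` J)"
    and inj: "inj_on (\<lambda>e. rigidity_row x0 (fst e) (snd e)) J"
    and A: "finite A" "\<forall>\<alpha>\<in>A. \<forall>j. j \<notin> J \<longrightarrow> \<alpha> j = 0"
    and P: "Pv J A c (\<lambda>e. dsq (p (fst e)) (p (snd e))) = 0"
  shows "\<forall>\<alpha>\<in>A. c \<alpha> = 0"
proof -
  have P': "Pv J A c (\<lambda>e. dsq (x0 (fst e)) (x0 (snd e))) = 0"
    by (rule transfer_real[OF genp _ P]) simp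
  have "\<forall>\<alpha>\<in>A. sum \<alpha> J \<le> (\<Sum>\<beta>\<in>A. sum \<beta> J)"
    using A(1) by (intro ballI member_le_sum) auto
  then have H: "finite A \<and> (\<forall>\<alpha>\<in>A. (\<forall>j. j \<notin> J \<longrightarrow> \<alpha> j = 0) \<and> sum \<alpha> J \<le> (\<Sum>\<beta>\<in>A. sum \<beta> J))
      \<and> Pv J A c (\<lambda>e. dsq (x0 (fst e)) (x0 (snd e))) = 0"
    using A P' by (simp del: split_paired_All)
  note j = jacobian_N[OF gen loop ind inj, of "\<Sum>\<beta>\<in>A. sum \<beta> J", rule_format]
  show ?thesis using j[OF H] by blast
qed

lemma rigid_edges:
  fixes E :: "('v::finite \<times> 'v) set"
  assumes "rigid E" "\<forall>(u, v) \<in> E. u \<noteq> v"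
  obtains x0 :: "'v \<Rightarrow> real \<times> real" and J where "generic x0" "J \<subseteq> E" "card J = 2 * CARD('v) - 3"
    "\<forall>e\<in>J. fst e \<noteq> snd e"
    "independent ((\<lambda>e. rigidity_row x0 (fst e) (snd e)) ` J)"
    "inj_on (\<lambda>e. rigidity_row x0 (fst e) (snd e)) J"
proof -
  obtain x0 :: "'v \<Rightarrow> real \<times> real" where x0: "generic x0" "rigidity_rank E x0 = 2 * CARD('v) - 3"
    using assms(1) unfolding rigid_def by blast
  define row where "row = (\<lambda>e. rigidity_row x0 (fst e) (snd e))"
  have rowE: "(\<lambda>(u, v). rigidity_row x0 u v) ` E = row ` E"
    unfolding row_def by (simp add: case_prod_beta)
  obtain B where B: "B \<subseteq> row ` E" "independent B" "card B = dim (row ` E)"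
    by (rule real_vector.basis_exists[of "row ` E"])
  obtain J where J: "J \<subseteq> E" "inj_on row J" "B = row ` J"
    using B(1) unfolding subset_image_inj by blast
  have "card J = card B" using card_image[OF J(2)] J(3) by simp
  also have "\<dots> = 2 * CARD('v) - 3" using B(3) x0(2) rowE by (simp add: rigidity_rank_def)
  finally have cJ: "card J = 2 * CARD('v) - 3" .
  have "\<forall>e\<in>J. fst e \<noteq> snd e" using J(1) assms(2) by auto
  then show ?thesis using that[OF x0(1) J(1) cJ] B(2) J by (simp add: row_def)
qed



definition isu :: "complex \<times> complex \<Rightarrow> complex" where "isu P = fst P + \<i> * snd P"
definition isw :: "complex \<times> complex \<Rightarrow> complex" where "isw P = fst P - \<i> * snd P"

lemma iso_dsq: "dsq P Q = (isu P - isu Q) * (isw P - isw Q)"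
  by (simp add: dsq_def isu_def isw_def algebra_simps power2_eq_square)

lemma param_contra:
  fixes p q0 :: "'v \<Rightarrow> complex \<times> complex" and g :: "'v \<times> 'v \<Rightarrow> ('i \<Rightarrow> complex) \<Rightarrow> complex"
  assumes AI: "\<forall>A c. finite A \<and> (\<forall>\<alpha>\<in>A. \<forall>j. j \<notin> J \<longrightarrow> \<alpha> j = 0)
           \<and> Pv J A c (\<lambda>e. dsq (p (fst e)) (p (snd e))) = 0 \<longrightarrow> (\<forall>\<alpha>\<in>A. c \<alpha> = 0)"
    and eq: "\<forall>e\<in>J. dsq (q0 (fst e)) (q0 (snd e)) = dsq (p (fst e)) (p (snd e))"
    and T: "finite T" "finite J" "card T < card J"
    and g: "\<forall>e. g e \<in> PD T d \<and> g e t = dsq (q0 (fst e)) (q0 (snd e))"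
  shows False
proof -
  have gJ: "\<forall>j\<in>J. g j \<in> PD T d" using g by blast
  obtain A c where Ac: "finite A \<and> (\<forall>\<alpha>\<in>A. \<forall>j. j \<notin> J \<longrightarrow> \<alpha> j = 0) \<and> (\<exists>\<alpha>\<in>A. c \<alpha> \<noteq> 0)
     \<and> (\<forall>z. (\<Sum>\<alpha>\<in>A. of_rat (c \<alpha>) * (\<Prod>j\<in>J. g j z ^ \<alpha> j)) = 0)"
    using counting[OF T(1) T(2) T(3) gJ] by blast
  have gt: "g j t = dsq (p (fst j)) (p (snd j))" if "j \<in> J" for j
    using eq[rule_format, OF that] g[rule_format, of j] by simp
  have pr: "(\<Prod>j\<in>J. dsq (p (fst j)) (p (snd j)) ^ \<alpha> j) = (\<Prod>j\<in>J. g j t ^ \<alpha> j)" for \<alpha>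
    by (rule prod.cong) (simp_all add: gt)
  have "Pv J A c (\<lambda>e. dsq (p (fst e)) (p (snd e))) = (\<Sum>\<alpha>\<in>A. of_rat (c \<alpha>) * (\<Prod>j\<in>J. g j t ^ \<alpha> j))"
    unfolding Pv_def pr ..
  also have "\<dots> = 0" using Ac by blast
  finally have "\<forall>\<alpha>\<in>A. c \<alpha> = 0" using AI[rule_format, of A c] Ac by blast
  then show False using Ac by blast
qed

lemma PD_zero: "(\<lambda>z. 0) \<in> PD I D"
  using PD_const[of 0 I D] by simp

lemma PD_one: "(\<lambda>z. 1) \<in> PD I D"
  using PD_const[of 1 I D] by simp

lemma deg_iso:
  fixes u w :: "'v::finite \<Rightarrow> complex" and q0 :: "'v \<Rightarrow> complex \<times> complex"
  assumes d: "\<forall>a b. dsq (q0 a) (q0 b) = (u a - u b) * (w a - w b)"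
    and uu: "u v2 = u v1" and v12: "v1 \<noteq> v2"
  defines "T \<equiv> {a. a \<noteq> v1 \<and> a \<noteq> v2} \<times> (UNIV :: bool set)"
  shows "\<exists>t g. \<forall>e. g e \<in> PD T 2 \<and> g e t = dsq (q0 (fst e)) (q0 (snd e))"
proof -
  define V' where "V' = {a. a \<noteq> v1 \<and> a \<noteq> v2}"
  define l where "l = (if w v2 = w v1 then 1 else w v2 - w v1)"
  have l0: "l \<noteq> 0" by (simp add: l_def)
  define t where "t = (\<lambda>(a, b). if b then l * (u a - u v1) else (w a - w v1) / l)"
  define Ut where "Ut = (\<lambda>a (z::'v \<times> bool \<Rightarrow> complex). if a \<in> V' then z (a, True) else 0)"
  define Wt where "Wt = (\<lambda>a (z::'v \<times> bool \<Rightarrow> complex). if a \<in> V' then z (a, False)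
                 else if a = v2 then (if w v2 = w v1 then 0 else 1) else 0)"
  have Ut_t: "Ut a t = l * (u a - u v1)" for a using uu by (auto simp: Ut_def t_def V'_def)
  have Wt_t: "Wt a t = (w a - w v1) / l" for a using l0 by (auto simp: Wt_def t_def V'_def l_def)
  have fT: "finite T" by (simp add: T_def)
  have Ut_PD: "Ut a \<in> PD T 1" for a
  proof (cases "a \<in> V'")
    case True
    then have "Ut a = (\<lambda>z. z (a, True))" by (simp add: Ut_def fun_eq_iff)
    then show ?thesis using PD_var[OF fT, of "(a, True)"] True by (simp add: T_def V'_def)
  next
    case False
    then have "Ut a = (\<lambda>z. 0)" by (simp add: Ut_def fun_eq_iff)
    then show ?thesis using PD_zero by simp
  qed
  have Wt_PD: "Wt a \<in> PD T 1" for a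
  proof (cases "a \<in> V'")
    case True
    then have "Wt a = (\<lambda>z. z (a, False))" by (simp add: Wt_def fun_eq_iff)
    then show ?thesis using PD_var[OF fT, of "(a, False)"] True by (simp add: T_def V'_def)
  next
    case False
    then have "Wt a = (\<lambda>z. 0) \<or> Wt a = (\<lambda>z. 1)" by (auto simp: Wt_def fun_eq_iff)
    then show ?thesis using PD_zero PD_one by metis
  qed
  define g where "g = (\<lambda>e. (Ut (fst e) - Ut (snd e)) * (Wt (fst e) - Wt (snd e)))"
  show ?thesis
  proof (intro exI[of _ t] exI[of _ g] allI conjI)
    fix e :: "'v \<times> 'v"
    show "g e \<in> PD T 2"
      unfolding g_def using PD_mult[OF PD_diff[OF Ut_PD Ut_PD] PD_diff[OF Wt_PD Wt_PD]]
      by (metis one_add_one)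
    have "g e t = (Ut (fst e) t - Ut (snd e) t) * (Wt (fst e) t - Wt (snd e) t)" by (simp add: g_def)
    also have "\<dots> = (l * (u (fst e) - u v1) - l * (u (snd e) - u v1)) * ((w (fst e) - w v1) / l - (w (snd e) - w v1) / l)"
      by (simp only: Ut_t Wt_t)
    also have "\<dots> = (l * (u (fst e) - u (snd e))) * ((w (fst e) - w (snd e)) / l)"
      by (simp add: right_diff_distrib diff_divide_distrib)
    also have "\<dots> = (u (fst e) - u (snd e)) * (w (fst e) - w (snd e))"
      using l0 by simp
    finally show "g e t = dsq (q0 (fst e)) (q0 (snd e))" using d by simp
  qed
qed

lemma deg_col:
  fixes u w :: "'v::finite \<Rightarrow> complex" and q0 :: "'v \<Rightarrow> complex \<times> complex"
  assumes d: "\<forall>a b. dsq (q0 a) (q0 b) = (u a - u b) * (w a - w b)"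
    and A: "u v2 \<noteq> u v1" and B: "w v2 \<noteq> w v1"
    and col: "\<forall>c. (u c - u v1) * (w v2 - w v1) = (u v2 - u v1) * (w c - w v1)"
    and v12: "v1 \<noteq> v2"
  defines "T \<equiv> insert (v1, True) ((\<lambda>a. (a, True)) ` {a. a \<noteq> v1 \<and> a \<noteq> v2})"
  shows "\<exists>t g. \<forall>e. g e \<in> PD T 3 \<and> g e t = dsq (q0 (fst e)) (q0 (snd e))"
proof -
  define V' where "V' = {a. a \<noteq> v1 \<and> a \<noteq> v2}"
  define mu where "mu = (\<lambda>a. (u a - u v1) / (u v2 - u v1))"
  have mu_u: "u a - u b = (mu a - mu b) * (u v2 - u v1)" for a b
  proof -
    have "mu a - mu b = ((u a - u v1) - (u b - u v1)) / (u v2 - u v1)"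
      unfolding mu_def by (rule diff_divide_distrib[symmetric])
    then show ?thesis using A by simp
  qed
  have mu_w: "w a - w b = (mu a - mu b) * (w v2 - w v1)" for a b
  proof -
    have "w a - w v1 = mu a * (w v2 - w v1)" for a
      using col[rule_format, of a] A by (simp add: mu_def field_simps)
    then have ea: "w a = w v1 + mu a * (w v2 - w v1)" and eb: "w b = w v1 + mu b * (w v2 - w v1)"
      by (metis add_diff_cancel_left' diff_add_cancel add.commute)+
    have "w a - w b = (w v1 + mu a * (w v2 - w v1)) - (w v1 + mu b * (w v2 - w v1))"
      by (rule arg_cong2[where f = "(-)"]) (fact ea, fact eb)
    then show ?thesis by (simp add: algebra_simps)
  qed
  define t where "t = (\<lambda>(a::'v, b::bool). if a = v1 then (u v2 - u v1) * (w v2 - w v1) else mu a)"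
  define Mt where "Mt = (\<lambda>a (z::'v \<times> bool \<Rightarrow> complex). if a \<in> V' then z (a, True)
                 else if a = v2 then 1 else 0)"
  have Mt_t: "Mt a t = mu a" for a using A v12 by (auto simp: Mt_def t_def V'_def mu_def)
  have fT: "finite T" by (simp add: T_def)
  have Mt_PD: "Mt a \<in> PD T 1" for a
  proof (cases "a \<in> V'")
    case True
    then have "Mt a = (\<lambda>z. z (a, True))" by (simp add: Mt_def fun_eq_iff)
    then show ?thesis using PD_var[OF fT, of "(a, True)"] True by (simp add: T_def V'_def)
  next
    case False
    then have "Mt a = (\<lambda>z. 0) \<or> Mt a = (\<lambda>z. 1)" by (auto simp: Mt_def fun_eq_iff)
    then show ?thesis using PD_zero PD_one by metis
  qed
  have v1PD: "(\<lambda>z::'v \<times> bool \<Rightarrow> complex. z (v1, True)) \<in> PD T 1"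
    using PD_var[OF fT, of "(v1, True)"] by (simp add: T_def)
  define g where "g = (\<lambda>e. (\<lambda>z::'v \<times> bool \<Rightarrow> complex. z (v1, True)) * ((Mt (fst e) - Mt (snd e)) * (Mt (fst e) - Mt (snd e))))"
  show ?thesis
  proof (intro exI[of _ t] exI[of _ g] allI conjI)
    fix e :: "'v \<times> 'v"
    have "g e \<in> PD T (1 + (1 + 1))"
      unfolding g_def by (intro PD_mult PD_diff Mt_PD v1PD)
    then show "g e \<in> PD T 3" by (simp add: numeral_3_eq_3)
    have "g e t = t (v1, True) * ((Mt (fst e) t - Mt (snd e) t) * (Mt (fst e) t - Mt (snd e) t))" by (simp add: g_def)
    also have "\<dots> = ((u v2 - u v1) * (w v2 - w v1)) * ((mu (fst e) - mu (snd e)) * (mu (fst e) - mu (snd e)))"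
      by (simp only: Mt_t) (simp add: t_def)
    also have "\<dots> = ((mu (fst e) - mu (snd e)) * (u v2 - u v1)) * ((mu (fst e) - mu (snd e)) * (w v2 - w v1))"
      by (simp only: mult_ac)
    also have "\<dots> = (u (fst e) - u (snd e)) * (w (fst e) - w (snd e))"
      by (simp only: mu_u[symmetric] mu_w[symmetric])
    finally show "g e t = dsq (q0 (fst e)) (q0 (snd e))" using d by simp
  qed
qed

lemma nondeg:
  fixes p q0 :: "'v::finite \<Rightarrow> complex \<times> complex"
  assumes AI: "\<forall>A c. finite A \<and> (\<forall>\<alpha>\<in>A. \<forall>j. j \<notin> J \<longrightarrow> \<alpha> j = 0)
           \<and> Pv J A c (\<lambda>e. dsq (p (fst e)) (p (snd e))) = 0 \<longrightarrow> (\<forall>\<alpha>\<in>A. c \<alpha> = 0)"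
    and eq: "\<forall>e\<in>J. dsq (q0 (fst e)) (q0 (snd e)) = dsq (p (fst e)) (p (snd e))"
    and cJ: "card J = 2 * CARD('v) - 3" and n3: "CARD('v) \<ge> 3" and v12: "v1 \<noteq> v2"
  shows "isu (q0 v2) \<noteq> isu (q0 v1) \<and> isw (q0 v2) \<noteq> isw (q0 v1) \<and>
    (\<exists>c. (isu (q0 c) - isu (q0 v1)) * (isw (q0 v2) - isw (q0 v1)) \<noteq> (isu (q0 v2) - isu (q0 v1)) * (isw (q0 c) - isw (q0 v1)))"
proof -
  define u where "u = (\<lambda>a. isu (q0 a))"
  define w where "w = (\<lambda>a. isw (q0 a))"
  have d: "\<forall>a b. dsq (q0 a) (q0 b) = (u a - u b) * (w a - w b)" by (simp add: u_def w_def iso_dsq)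
  have d': "\<forall>a b. dsq (q0 a) (q0 b) = (w a - w b) * (u a - u b)" using d by (simp add: mult.commute)
  define V' where "V' = {a::'v. a \<noteq> v1 \<and> a \<noteq> v2}"
  have V'eq: "V' = UNIV - {v1, v2}" by (auto simp: V'_def)
  have cV': "card V' = CARD('v) - 2" unfolding V'eq using v12 by (simp add: card_Diff_subset)
  have finJ: "finite J" by simp
  have c1: "card (V' \<times> (UNIV :: bool set)) < card J"
    using cV' cJ n3 by (simp add: card_cartesian_product)
  have c3: "card (insert (v1, True) ((\<lambda>a. (a, True)) ` V')) < card J"
  proof -
    have "card ((\<lambda>a. (a, True)) ` V') = card V'" by (rule card_image) (auto intro: inj_onI)
    moreover have "(v1, True) \<notin> (\<lambda>a. (a, True)) ` V'" by (auto simp: V'_def)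
    ultimately show ?thesis using cV' cJ n3 by simp
  qed
  have u12: "u v2 \<noteq> u v1"
  proof
    assume "u v2 = u v1"
    from deg_iso[OF d this v12] obtain t g where
      "\<forall>e. g e \<in> PD (V' \<times> (UNIV :: bool set)) 2 \<and> g e t = dsq (q0 (fst e)) (q0 (snd e))"
      unfolding V'_def by blast
    from param_contra[OF AI eq _ finJ c1 this] show False by simp
  qed
  have w12: "w v2 \<noteq> w v1"
  proof
    assume "w v2 = w v1"
    from deg_iso[OF d' this v12] obtain t g where
      "\<forall>e. g e \<in> PD (V' \<times> (UNIV :: bool set)) 2 \<and> g e t = dsq (q0 (fst e)) (q0 (snd e))"
      unfolding V'_def by blast
    from param_contra[OF AI eq _ finJ c1 this] show False by simp
  qed
  have "\<exists>c. (u c - u v1) * (w v2 - w v1) \<noteq> (u v2 - u v1) * (w c - w v1)"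
  proof (rule ccontr)
    assume "\<not> ?thesis"
    then have col: "\<forall>c. (u c - u v1) * (w v2 - w v1) = (u v2 - u v1) * (w c - w v1)" by blast
    from deg_col[OF d u12 w12 col v12] obtain t g where
      "\<forall>e. g e \<in> PD (insert (v1, True) ((\<lambda>a. (a, True)) ` V')) 3 \<and> g e t = dsq (q0 (fst e)) (q0 (snd e))"
      unfolding V'_def by blast
    from param_contra[OF AI eq _ finJ c3 this] show False by simp
  qed
  then show ?thesis using u12 w12 by (simp add: u_def w_def)
qed



lemma two_sol:
  fixes X Y a b :: complex
  assumes "X * Y = a * b" "X + Y = a + b"
  shows "(X = a \<and> Y = b) \<or> (X = b \<and> Y = a)"
proof -
  have "(X - a) * (X - b) = 0"
  proof -
    have "(X - a) * (X - b) = X * X - X * (a + b) + a * b" by (simp add: algebra_simps)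
    also have "\<dots> = X * X - X * (X + Y) + X * Y" using assms by simp
    also have "\<dots> = 0" by (simp add: algebra_simps)
    finally show ?thesis .
  qed
  then have "X = a \<or> X = b" by simp
  then show ?thesis using assms(2) by auto
qed

lemma classify:
  fixes U W u w :: "'v \<Rightarrow> complex"
  assumes cong: "\<forall>x y. (U x - U y) * (W x - W y) = (u x - u y) * (w x - w y)"
    and U1: "U v1 = 0" and W1: "W v1 = 0" and sum2: "U v2 + W v2 = 0"
    and A: "u v2 \<noteq> u v1" and B: "w v2 \<noteq> w v1"
    and nd: "(u c - u v1) * (w v2 - w v1) \<noteq> (u v2 - u v1) * (w c - w v1)"
  shows "(\<exists>l. l \<noteq> 0 \<and> l^2 = - (w v2 - w v1) / (u v2 - u v1) \<and>
            (\<forall>a. U a = l * (u a - u v1) \<and> W a = (w a - w v1) / l))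
       \<or> (\<exists>l. l \<noteq> 0 \<and> l^2 = - (u v2 - u v1) / (w v2 - w v1) \<and>
            (\<forall>a. U a = l * (w a - w v1) \<and> W a = (u a - u v1) / l))"
proof -
  define A0 where "A0 = u v2 - u v1"
  define B0 where "B0 = w v2 - w v1"
  define u' where "u' = (\<lambda>a. u a - u v1)"
  define w' where "w' = (\<lambda>a. w a - w v1)"
  have A0: "A0 \<noteq> 0" and B0: "B0 \<noteq> 0" using A B by (auto simp: A0_def B0_def)
  have cong': "(U x - U y) * (W x - W y) = (u' x - u' y) * (w' x - w' y)" for x y
    using cong by (simp add: u'_def w'_def)
  have u'2: "u' v2 = A0" and w'2: "w' v2 = B0" by (simp_all add: u'_def w'_def A0_def B0_def)
  have UW2: "U v2 * W v2 = A0 * B0" using cong'[of v2 v1] U1 W1 by (simp add: u'_def w'_def A0_def B0_def)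
  have U2: "U v2 \<noteq> 0" and W2: "W v2 \<noteq> 0" using UW2 A0 B0 by auto
  have W2U2: "W v2 = - U v2" using add.inverse_unique[OF sum2] by simp
  have sqU2: "U v2 ^ 2 = - (A0 * B0)"
  proof -
    have "U v2 ^ 2 = - (U v2 * W v2)" using W2U2 by (simp add: power2_eq_square)
    also have "\<dots> = - (A0 * B0)" using UW2 by simp
    finally show ?thesis .
  qed
  define prp where "prp = (\<lambda>a. U a * W v2 = u' a * B0 \<and> U v2 * W a = A0 * w' a)"
  define imq where "imq = (\<lambda>a. U a * W v2 = A0 * w' a \<and> U v2 * W a = u' a * B0)"
  have pi: "prp a \<or> imq a" for a
  proof -
    have e1: "U a * W a = u' a * w' a" using cong'[of a v1] U1 W1 by (simp add: u'_def w'_def)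
    have e2: "(U a - U v2) * (W a - W v2) = (u' a - A0) * (w' a - B0)"
      using cong'[of a v2] by (simp add: u'2 w'2)
    have s: "U a * W v2 + U v2 * W a = u' a * B0 + A0 * w' a"
      using e1 e2 UW2 by (simp add: algebra_simps)
    have p: "(U a * W v2) * (U v2 * W a) = (u' a * B0) * (A0 * w' a)"
    proof -
      have "(U a * W v2) * (U v2 * W a) = (U a * W a) * (U v2 * W v2)" by (simp add: ac_simps)
      also have "\<dots> = (u' a * B0) * (A0 * w' a)" using e1 UW2 by (simp add: ac_simps)
      finally show ?thesis .
    qed
    from two_sol[OF p s] show ?thesis unfolding prp_def imq_def by auto
  qed
  have mixed: "(A0 * w' y - B0 * u' y) * (A0 * w' x - B0 * u' x) = 0" if px: "prp x" and iy: "imq y" for x y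
  proof -
    have "(U x - U y) * (W x - W y) * (W v2 * U v2) = (u' x - u' y) * (w' x - w' y) * (A0 * B0)"
      using cong'[of x y] UW2 by (simp add: ac_simps)
    moreover have "(U x - U y) * (W x - W y) * (W v2 * U v2) = (U x * W v2 - U y * W v2) * (U v2 * W x - U v2 * W y)"
      by (simp add: algebra_simps)
    moreover have "\<dots> = (u' x * B0 - A0 * w' y) * (A0 * w' x - u' y * B0)"
      using px iy by (simp add: prp_def imq_def)
    ultimately have "(u' x * B0 - A0 * w' y) * (A0 * w' x - u' y * B0) = (u' x - u' y) * (w' x - w' y) * (A0 * B0)"
      by simp
    then show ?thesis by (simp add: algebra_simps)
  qed
  have ndc: "A0 * w' c - B0 * u' c \<noteq> 0" using nd by (simp add: u'_def w'_def A0_def B0_def algebra_simps)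
  show ?thesis
  proof (cases "prp c")
    case True
    have allp: "prp a" for a
    proof (cases "imq a")
      case True
      have "(A0 * w' a - B0 * u' a) * (A0 * w' c - B0 * u' c) = 0" by (rule mixed[OF \<open>prp c\<close> True])
      then have E: "A0 * w' a = B0 * u' a" using ndc by simp
      have i1: "U a * W v2 = A0 * w' a" and i2: "U v2 * W a = u' a * B0" using True by (simp_all add: imq_def)
      have "U a * W v2 = u' a * B0" using i1 E by (simp add: mult.commute)
      moreover have "U v2 * W a = A0 * w' a" using i2 E by (simp add: mult.commute)
      ultimately show ?thesis by (simp add: prp_def)
    next
      case False then show ?thesis using pi by blast
    qed
    define l where "l = U v2 / A0"
    have l0: "l \<noteq> 0" using U2 A0 by (simp add: l_def)
    have l2: "l^2 = - B0 / A0" using sqU2 A0 by (simp add: l_def power_divide field_simps power2_eq_square)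
    have Ua: "U a = l * u' a" for a
    proof -
      have "U a * W v2 = u' a * B0" using allp[of a] by (simp add: prp_def)
      then have "U a * (- U v2) = u' a * B0" using W2U2 by simp
      then have "U a * (- U v2) * U v2 = u' a * B0 * U v2" by simp
      then have "U a * (A0 * B0) = u' a * B0 * U v2" using sqU2 by (simp add: power2_eq_square algebra_simps)
      then show ?thesis using A0 B0 by (simp add: l_def field_simps)
    qed
    have Wa: "W a = w' a / l" for a
    proof -
      have "U v2 * W a = A0 * w' a" using allp[of a] by (simp add: prp_def)
      then show ?thesis using A0 U2 by (simp add: l_def field_simps)
    qed
    show ?thesis
      by (rule disjI1, rule exI[of _ l]) (use l0 l2 Ua Wa in \<open>simp add: A0_def B0_def u'_def w'_def\<close>)
  next
    case False
    then have ic: "imq c" using pi by blast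
    have alli: "imq a" for a
    proof (cases "prp a")
      case True
      have "(A0 * w' c - B0 * u' c) * (A0 * w' a - B0 * u' a) = 0" by (rule mixed[OF True ic])
      then have E: "A0 * w' a = B0 * u' a" using ndc by simp
      have i1: "U a * W v2 = u' a * B0" and i2: "U v2 * W a = A0 * w' a" using True by (simp_all add: prp_def)
      have "U a * W v2 = A0 * w' a" using i1 E by (simp add: mult.commute)
      moreover have "U v2 * W a = u' a * B0" using i2 E by (simp add: mult.commute)
      ultimately show ?thesis by (simp add: imq_def)
    next
      case False then show ?thesis using pi by blast
    qed
    define l where "l = U v2 / B0"
    have l0: "l \<noteq> 0" using U2 B0 by (simp add: l_def)
    have l2: "l^2 = - A0 / B0" using sqU2 B0 by (simp add: l_def power_divide field_simps power2_eq_square)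
    have Ua: "U a = l * w' a" for a
    proof -
      have "U a * W v2 = A0 * w' a" using alli[of a] by (simp add: imq_def)
      then have "U a * (- U v2) = A0 * w' a" using W2U2 by simp
      then have "U a * (- U v2) * U v2 = A0 * w' a * U v2" by simp
      then have "U a * (A0 * B0) = A0 * w' a * U v2" using sqU2 by (simp add: power2_eq_square algebra_simps)
      then show ?thesis using A0 B0 by (simp add: l_def field_simps)
    qed
    have Wa: "W a = u' a / l" for a
    proof -
      have "U v2 * W a = u' a * B0" using alli[of a] by (simp add: imq_def)
      then show ?thesis using B0 U2 by (simp add: l_def field_simps)
    qed
    show ?thesis
      by (rule disjI2, rule exI[of _ l]) (use l0 l2 Ua Wa in \<open>simp add: A0_def B0_def u'_def w'_def\<close>)
  qed
qed

definition pt :: "complex \<Rightarrow> complex \<Rightarrow> complex \<times> complex" where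
  "pt U W = ((U + W) / 2, (U - W) / (2 * \<i>))"

lemma isu_pt[simp]: "isu (pt U W) = U"
  by (simp add: isu_def pt_def field_simps)
lemma isw_pt[simp]: "isw (pt U W) = W"
  by (simp add: isw_def pt_def field_simps)
lemma pt_iso: "pt (isu P) (isw P) = P"
  by (cases P) (simp add: isu_def isw_def pt_def field_simps)
lemma dsq_pt: "dsq (pt U W) (pt U' W') = (U - U') * (W - W')"
  by (simp add: iso_dsq)
lemma pt_00: "pt 0 0 = (0, 0)" by (simp add: pt_def)
lemma fst_pt: "fst (pt U W) = (U + W) / 2" by (simp add: pt_def)
lemma snd_pt: "snd (pt U W) = (U - W) / (2 * \<i>)" by (simp add: pt_def)

lemma arg_xor:
  fixes z :: complex
  assumes "z \<noteq> 0"
  shows "Arg (- z) \<in> {0<..pi} \<longleftrightarrow> \<not> Arg z \<in> {0<..pi}"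
proof -
  have b: "- pi < Arg z" "Arg z \<le> pi" using Arg_bounded[of z] by auto
  show ?thesis using Arg_minus[OF assms] b by auto
qed

lemma count4:
  fixes q0 :: "'v \<Rightarrow> complex \<times> complex"
  assumes A: "isu (q0 v2) \<noteq> isu (q0 v1)" and B: "isw (q0 v2) \<noteq> isw (q0 v1)"
    and nd: "(isu (q0 c) - isu (q0 v1)) * (isw (q0 v2) - isw (q0 v1)) \<noteq> (isu (q0 v2) - isu (q0 v1)) * (isw (q0 c) - isw (q0 v1))"
  shows "card {q. congruent q0 q \<and> q v1 = (0, 0) \<and> fst (q v2) = 0} = 4
       \<and> card {q. congruent q0 q \<and> q v1 = (0, 0) \<and> fst (q v2) = 0 \<and> Arg (snd (q v2)) \<in> {0<..pi}} = 2"
proof -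
  define u where "u = (\<lambda>a. isu (q0 a))"
  define w where "w = (\<lambda>a. isw (q0 a))"
  define A0 where "A0 = u v2 - u v1"
  define B0 where "B0 = w v2 - w v1"
  have A0: "A0 \<noteq> 0" and B0: "B0 \<noteq> 0" using A B by (auto simp: A0_def B0_def u_def w_def)
  have ndc: "(u c - u v1) * B0 \<noteq> A0 * (w c - w v1)" using nd by (simp add: u_def w_def A0_def B0_def)
  have dq: "dsq (q0 x) (q0 y) = (u x - u y) * (w x - w y)" for x y by (simp add: iso_dsq u_def w_def)
  define Pr where "Pr = (\<lambda>l a. pt (l * (u a - u v1)) ((w a - w v1) / l))"
  define Im where "Im = (\<lambda>l a. pt (l * (w a - w v1)) ((u a - u v1) / l))"
  define T where "T = {q. congruent q0 q \<and> q v1 = (0, 0) \<and> fst (q v2) = 0}"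
  define P where "P = (\<lambda>q::'v \<Rightarrow> complex \<times> complex. Arg (snd (q v2)) \<in> {0<..pi})"
  define s where "s = csqrt (- B0 / A0)"
  define r where "r = csqrt (- A0 / B0)"
  have s2: "s^2 = - B0 / A0" by (simp add: s_def)
  have r2: "r^2 = - A0 / B0" by (simp add: r_def)
  have s0: "s \<noteq> 0" using s2 A0 B0 by auto
  have r0: "r \<noteq> 0" using r2 A0 B0 by auto
  have Prv2: "Pr l v2 = pt (l * A0) (B0 / l)" for l by (simp add: Pr_def A0_def B0_def)
  have Imv2: "Im l v2 = pt (l * B0) (A0 / l)" for l by (simp add: Im_def A0_def B0_def)
  have inPr: "Pr l \<in> T" if l0: "l \<noteq> 0" and l2: "l^2 = - B0 / A0" for l
  proof -
    have "dsq (q0 x) (q0 y) = dsq (Pr l x) (Pr l y)" for x y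
    proof -
      have "dsq (Pr l x) (Pr l y) = (l * (u x - u v1) - l * (u y - u v1)) * ((w x - w v1) / l - (w y - w v1) / l)"
        by (simp add: Pr_def dsq_pt)
      also have "\<dots> = (l * (u x - u y)) * ((w x - w y) / l)"
        by (simp add: right_diff_distrib diff_divide_distrib)
      also have "\<dots> = (u x - u y) * (w x - w y)" using l0 by simp
      finally show ?thesis by (simp add: dq)
    qed
    moreover have "Pr l v1 = (0, 0)" by (simp add: Pr_def pt_00)
    moreover have "fst (Pr l v2) = 0"
    proof -
      have "B0 = - (l^2 * A0)" using l2 A0 by (simp add: field_simps)
      then have "l * A0 + B0 / l = 0" using l0 by (simp add: field_simps power2_eq_square)
      then show ?thesis by (simp add: Prv2 fst_pt)
    qed
    ultimately show ?thesis by (simp add: T_def congruent_def)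
  qed
  have inIm: "Im l \<in> T" if l0: "l \<noteq> 0" and l2: "l^2 = - A0 / B0" for l
  proof -
    have "dsq (q0 x) (q0 y) = dsq (Im l x) (Im l y)" for x y
    proof -
      have "dsq (Im l x) (Im l y) = (l * (w x - w v1) - l * (w y - w v1)) * ((u x - u v1) / l - (u y - u v1) / l)"
        by (simp add: Im_def dsq_pt)
      also have "\<dots> = (l * (w x - w y)) * ((u x - u y) / l)"
        by (simp add: right_diff_distrib diff_divide_distrib)
      also have "\<dots> = (u x - u y) * (w x - w y)" using l0 by simp
      finally show ?thesis by (simp add: dq)
    qed
    moreover have "Im l v1 = (0, 0)" by (simp add: Im_def pt_00)
    moreover have "fst (Im l v2) = 0"
    proof -
      have "A0 = - (l^2 * B0)" using l2 B0 by (simp add: field_simps)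
      then have "l * B0 + A0 / l = 0" using l0 by (simp add: field_simps power2_eq_square)
      then show ?thesis by (simp add: Imv2 fst_pt)
    qed
    ultimately show ?thesis by (simp add: T_def congruent_def)
  qed
  have Tsub: "T \<subseteq> {Pr s, Pr (- s), Im r, Im (- r)}"
  proof
    fix q assume "q \<in> T"
    then have qc: "congruent q0 q" and q1: "q v1 = (0, 0)" and q2: "fst (q v2) = 0" by (auto simp: T_def)
    define U where "U = (\<lambda>a. isu (q a))"
    define W where "W = (\<lambda>a. isw (q a))"
    have qpt: "q a = pt (U a) (W a)" for a by (simp add: U_def W_def pt_iso)
    have cong: "\<forall>x y. (U x - U y) * (W x - W y) = (u x - u y) * (w x - w y)"
      using qc by (simp add: congruent_def U_def W_def iso_dsq u_def w_def)
    have U1: "U v1 = 0" and W1: "W v1 = 0" using q1 by (simp_all add: U_def W_def isu_def isw_def)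
    have sum2: "U v2 + W v2 = 0" using q2 by (simp add: U_def W_def isu_def isw_def)
    from classify[OF cong U1 W1 sum2, of c] A B nd
    consider (p) l where "l \<noteq> 0" "l^2 = - B0 / A0" "\<forall>a. U a = l * (u a - u v1) \<and> W a = (w a - w v1) / l"
      | (i) l where "l \<noteq> 0" "l^2 = - A0 / B0" "\<forall>a. U a = l * (w a - w v1) \<and> W a = (u a - u v1) / l"
      by (auto simp: u_def w_def A0_def B0_def)
    then show "q \<in> {Pr s, Pr (- s), Im r, Im (- r)}"
    proof cases
      case p
      then have "q = Pr l" by (simp add: fun_eq_iff qpt Pr_def)
      moreover have "l^2 = s^2" using p(2) s2 by simp
      then have "l = s \<or> l = - s" using power2_eq_iff[of l s] by simp
      ultimately show ?thesis by auto
    next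
      case i
      then have "q = Im l" by (simp add: fun_eq_iff qpt Im_def)
      moreover have "l^2 = r^2" using i(2) r2 by simp
      then have "l = r \<or> l = - r" using power2_eq_iff[of l r] by simp
      ultimately show ?thesis by auto
    qed
  qed
  have Teq: "T = {Pr s, Pr (- s), Im r, Im (- r)}"
    using Tsub inPr[OF s0 s2] inPr[of "- s"] inIm[OF r0 r2] inIm[of "- r"] s0 s2 r0 r2 by auto
  have d1: "Pr s \<noteq> Pr (- s)"
  proof
    assume "Pr s = Pr (- s)"
    then have "isu (Pr s v2) = isu (Pr (- s) v2)" by simp
    then show False using s0 A0 by (simp add: Prv2)
  qed
  have d2: "Im r \<noteq> Im (- r)"
  proof
    assume "Im r = Im (- r)"
    then have "isu (Im r v2) = isu (Im (- r) v2)" by simp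
    then show False using r0 B0 by (simp add: Imv2)
  qed
  have d3: "Pr l \<noteq> Im m" if "l \<noteq> 0" "m \<noteq> 0" for l m
  proof
    assume eq: "Pr l = Im m"
    have e2: "l * A0 = m * B0" using arg_cong[OF eq, of "\<lambda>f. isu (f v2)"] by (simp add: Prv2 Imv2)
    have ec: "l * (u c - u v1) = m * (w c - w v1)" using arg_cong[OF eq, of "\<lambda>f. isu (f c)"] by (simp add: Pr_def Im_def)
    have "m = l * A0 / B0" using e2 B0 by (simp add: field_simps)
    then have "l * (u c - u v1) = l * (A0 / B0 * (w c - w v1))" using ec by simp
    then have "u c - u v1 = A0 / B0 * (w c - w v1)" using mult_left_cancel[OF that(1)] by blast
    then have "(u c - u v1) * B0 = A0 / B0 * (w c - w v1) * B0" by simp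
    also have "\<dots> = A0 * (w c - w v1)" using B0 by simp
    finally have "(u c - u v1) * B0 = A0 * (w c - w v1)" .
    then show False using ndc by simp
  qed
  have card4: "card T = 4"
    unfolding Teq using d1 d2 d3[OF s0 r0] d3[of s "- r"] d3[of "- s" r] d3[of "- s" "- r"] s0 r0
    by (simp add: card_insert_if)
  have sndPr: "snd (Pr l v2) = - \<i> * l * A0" if "l \<noteq> 0" "l^2 = - B0 / A0" for l
  proof -
    have "B0 / l = - (l * A0)" using that A0 by (simp add: field_simps power2_eq_square)
    then show ?thesis by (simp add: Prv2 snd_pt field_simps)
  qed
  have sndIm: "snd (Im l v2) = - \<i> * l * B0" if "l \<noteq> 0" "l^2 = - A0 / B0" for l
  proof -
    have "A0 / l = - (l * B0)" using that B0 by (simp add: field_simps power2_eq_square)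
    then show ?thesis by (simp add: Imv2 snd_pt field_simps)
  qed
  have xPr: "P (Pr (- s)) \<longleftrightarrow> \<not> P (Pr s)"
  proof -
    have "snd (Pr (- s) v2) = - snd (Pr s v2)" using sndPr[OF s0 s2] sndPr[of "- s"] s0 s2 by simp
    moreover have "snd (Pr s v2) \<noteq> 0" using sndPr[OF s0 s2] s0 A0 by simp
    ultimately show ?thesis unfolding P_def using arg_xor by simp
  qed
  have xIm: "P (Im (- r)) \<longleftrightarrow> \<not> P (Im r)"
  proof -
    have "snd (Im (- r) v2) = - snd (Im r v2)" using sndIm[OF r0 r2] sndIm[of "- r"] r0 r2 by simp
    moreover have "snd (Im r v2) \<noteq> 0" using sndIm[OF r0 r2] r0 B0 by simp
    ultimately show ?thesis unfolding P_def using arg_xor by simp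
  qed
  define x where "x = (if P (Pr s) then Pr s else Pr (- s))"
  define y where "y = (if P (Im r) then Im r else Im (- r))"
  have T2: "{q. congruent q0 q \<and> q v1 = (0, 0) \<and> fst (q v2) = 0 \<and> Arg (snd (q v2)) \<in> {0<..pi}} = {x, y}"
  proof -
    have "{q. congruent q0 q \<and> q v1 = (0, 0) \<and> fst (q v2) = 0 \<and> Arg (snd (q v2)) \<in> {0<..pi}} = {q \<in> T. P q}"
      by (auto simp: T_def P_def)
    also have "\<dots> = {x, y}" unfolding Teq x_def y_def using xPr xIm by auto
    finally show ?thesis .
  qed
  have "x \<noteq> y" unfolding x_def y_def using d3 s0 r0 by auto
  then have "card {x, y} = 2" by simp
  then show ?thesis using card4 T2 by (simp add: T_def)
qed

lemma cong_equiv: "equivalent E p q0 \<Longrightarrow> congruent q0 q \<Longrightarrow> equivalent E p q"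
  unfolding equivalent_def congruent_def by auto

theorem corollary5p3:
  fixes E :: "('v::finite \<times> 'v) set"
    and p :: "'v \<Rightarrow> complex \<times> complex"
    and v1 v2 :: 'v
  assumes loopless: "\<forall>(u, v) \<in> E. u \<noteq> v"
    and card: "CARD('v) \<ge> 3"
    and v12: "v1 \<noteq> v2"
    and rig: "rigid E"
    and gen: "generic p"
  defines "S \<equiv> {q. equivalent E p q}"
  shows "\<forall>q0 \<in> S.
           card {q \<in> S. congruent q0 q \<and> q v1 = (0, 0) \<and> fst (q v2) = 0} = 4
         \<and> card {q \<in> S. congruent q0 q \<and> q v1 = (0, 0) \<and> fst (q v2) = 0
                  \<and> Arg (snd (q v2)) \<in> {0<..pi}} = 2"
proof -
  obtain x0 :: "'v \<Rightarrow> real \<times> real" and J where x0: "generic x0" "J \<subseteq> E" "card J = 2 * CARD('v) - 3"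
    "\<forall>e\<in>J. fst e \<noteq> snd e"
    "independent ((\<lambda>e. rigidity_row x0 (fst e) (snd e)) ` J)"
    "inj_on (\<lambda>e. rigidity_row x0 (fst e) (snd e)) J"
    by (rule rigid_edges[OF rig loopless])
  have AI: "\<forall>A c. finite A \<and> (\<forall>\<alpha>\<in>A. \<forall>j. j \<notin> J \<longrightarrow> \<alpha> j = 0)
           \<and> Pv J A c (\<lambda>e. dsq (p (fst e)) (p (snd e))) = 0 \<longrightarrow> (\<forall>\<alpha>\<in>A. c \<alpha> = 0)"
    using jacobian[OF gen x0(1) x0(4) x0(5) x0(6)] by blast
  show ?thesis
  proof
    fix q0 assume "q0 \<in> S"
    then have eqv: "equivalent E p q0" by (simp add: S_def)
    have eq: "\<forall>e\<in>J. dsq (q0 (fst e)) (q0 (snd e)) = dsq (p (fst e)) (p (snd e))"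
    proof
      fix e assume "e \<in> J"
      then have "e \<in> E" using x0(2) by blast
      then show "dsq (q0 (fst e)) (q0 (snd e)) = dsq (p (fst e)) (p (snd e))"
        using eqv unfolding equivalent_def by (cases e) auto
    qed
    have nd: "isu (q0 v2) \<noteq> isu (q0 v1) \<and> isw (q0 v2) \<noteq> isw (q0 v1) \<and>
      (\<exists>c. (isu (q0 c) - isu (q0 v1)) * (isw (q0 v2) - isw (q0 v1)) \<noteq> (isu (q0 v2) - isu (q0 v1)) * (isw (q0 c) - isw (q0 v1)))"
      by (rule nondeg[OF AI eq x0(3) card v12])
    then obtain c where A: "isu (q0 v2) \<noteq> isu (q0 v1)" and B: "isw (q0 v2) \<noteq> isw (q0 v1)"
      and ndc: "(isu (q0 c) - isu (q0 v1)) * (isw (q0 v2) - isw (q0 v1)) \<noteq> (isu (q0 v2) - isu (q0 v1)) * (isw (q0 c) - isw (q0 v1))"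
      by blast
    have s1: "{q \<in> S. congruent q0 q \<and> q v1 = (0, 0) \<and> fst (q v2) = 0} = {q. congruent q0 q \<and> q v1 = (0, 0) \<and> fst (q v2) = 0}"
      using cong_equiv[OF eqv] by (auto simp: S_def)
    have s2: "{q \<in> S. congruent q0 q \<and> q v1 = (0, 0) \<and> fst (q v2) = 0 \<and> Arg (snd (q v2)) \<in> {0<..pi}}
        = {q. congruent q0 q \<and> q v1 = (0, 0) \<and> fst (q v2) = 0 \<and> Arg (snd (q v2)) \<in> {0<..pi}}"
      using cong_equiv[OF eqv] by (auto simp: S_def)
    show "card {q \<in> S. congruent q0 q \<and> q v1 = (0, 0) \<and> fst (q v2) = 0} = 4
         \<and> card {q \<in> S. congruent q0 q \<and> q v1 = (0, 0) \<and> fst (q v2) = 0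
                  \<and> Arg (snd (q v2)) \<in> {0<..pi}} = 2"
      unfolding s1 s2 by (rule count4[of q0 v2 v1 c, OF A B ndc])
  qed
qed

end
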